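(* Consider a discounted Markov decision problem and the inexact policy mirror descent method as described in the context, with $\pi^{(0)}\in\operatorname{rint}\Pi$ and step sizes $\eta_k>0$, and suppose that the inexact $Q$-evaluations satisfy $\|\widehat Q(\pi^{(k)})-Q(\pi^{(k)})\|_\infty\le\tau$ for all $k\ge0$. Then for all $k\ge0$, \[ \bigl\langle\widehat Q_s(\pi^{(k)}),\pi^{(k+1)}_s-\pi^{(k)}_s\bigr\rangle\le0\qquad\forall s\in\mathcal{S}, \] and for any $\rho\in\Delta(\mathcal{S})$, \[ V_\rho(\pi^{(k+1)})-V_\rho(\pi^{(k)})\le\frac{2}{1-\gamma}\tau. \]
   Context: A discounted Markov decision problem (cost-minimization form): finite state set $\mathcal{S}$, finite action set $\mathcal{A}$, transition probabilities $P(s'|s,a)$, cost $R:\mathcal{S}\times\mathcal{A}\to[0,1]$, discount $\gamma\in[0,1)$. Policies $\Pi=\Delta(\mathcal{A})^{|\mathcal{S}|}$; $\operatorname{rint}\Pi$ is the set of policies with all entries $\pi_{s,a}>0$. $V_s(\pi)=\mathbf{E}\bigl[\sum_{t\ge0}\gamma^tR(s_t,a_t)\mid s_0=s\bigr]$ with $a_t\sim\pi_{s_t}$, $s_{t+1}\sim P(\cdot|s_t,a_t)$; $V_\rho(\pi)=\sum_s\rho_sV_s(\pi)$. $Q_{s,a}(\pi)=R_{s,a}+\gamma\sum_{s'}P(s'|s,a)V_{s'}(\pi)$; $Q(\pi)\in\mathbf{R}^{|\mathcal{S}|\times|\mathcal{A}|}$, $Q_s(\pi)\in\mathbf{R}^{|\mathcal{A}|}$.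 Bregman divergence: $h:\mathbf{R}^{|\mathcal{A}|}\to\mathbf{R}\cup\{+\infty\}$ is a convex function of Legendre type (proper, closed, essentially smooth, strictly convex on the relative interior of its domain) with $\Delta(\mathcal{A})\subseteq\operatorname{dom}h$ and $\operatorname{rint}\Delta(\mathcal{A})\subseteq\operatorname{rint}\operatorname{dom}h$; $D(p,p')=h(p)-h(p')-\langle\nabla h(p'),p-p'\rangle$. Inexact policy mirror descent: at each iteration an estimate $\widehat Q(\pi^{(k)})\in\mathbf{R}^{|\mathcal{S}|\times|\mathcal{A}|}$ of $Q(\pi^{(k)})$ is available, and for each $s$, $\pi^{(k+1)}_s=\arg\min_{p\in\Delta(\mathcal{A})}\{\eta_k\langle\widehat Q_s(\pi^{(k)}),p\rangle+D(p,\pi^{(k)}_s)\}$. *)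

theory Defs
  imports "HOL-Analysis.Analysis"
begin

definition act_simplex :: "(real^'a::finite) set" where
  "act_simplex = {p. (\<forall>a. 0 \<le> p $ a) \<and> (\<Sum>a\<in>UNIV. p $ a) = 1}"

definition is_policy :: "('s \<Rightarrow> real^'a::finite) \<Rightarrow> bool" where
  "is_policy \<pi> \<longleftrightarrow> (\<forall>s. \<pi> s \<in> act_simplex)"

text \<open>Relative interior of the policy set: all entries strictly positive.\<close>
definition rint_policy :: "('s \<Rightarrow> real^'a::finite) \<Rightarrow> bool" where
  "rint_policy \<pi> \<longleftrightarrow> is_policy \<pi> \<and> (\<forall>s a. 0 < \<pi> s $ a)"

definition is_mdp :: "('s::finite \<Rightarrow> 'a::finite \<Rightarrow> 's \<Rightarrow> real) \<Rightarrow> ('s \<Rightarrow> 'a \<Rightarrow> real) \<Rightarrow> real \<Rightarrow> bool" where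
  "is_mdp P R \<gamma> \<longleftrightarrow>
     (\<forall>s a s'. 0 \<le> P s a s') \<and> (\<forall>s a. (\<Sum>s'\<in>UNIV. P s a s') = 1) \<and>
     (\<forall>s a. 0 \<le> R s a \<and> R s a \<le> 1) \<and> 0 \<le> \<gamma> \<and> \<gamma> < 1"

definition Ppi :: "('s::finite \<Rightarrow> 'a::finite \<Rightarrow> 's \<Rightarrow> real) \<Rightarrow> ('s \<Rightarrow> real^'a) \<Rightarrow> 's \<Rightarrow> 's \<Rightarrow> real" where
  "Ppi P \<pi> s s' = (\<Sum>a\<in>UNIV. \<pi> s $ a * P s a s')"

definition rpi :: "('s \<Rightarrow> 'a::finite \<Rightarrow> real) \<Rightarrow> ('s \<Rightarrow> real^'a) \<Rightarrow> 's \<Rightarrow> real" where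
  "rpi R \<pi> s = (\<Sum>a\<in>UNIV. \<pi> s $ a * R s a)"

text \<open>Law of s_t given s_0 = s0: state_dist P pi t s0 s = Pr(s_t = s | s_0 = s0).\<close>
primrec state_dist :: "('s::finite \<Rightarrow> 'a::finite \<Rightarrow> 's \<Rightarrow> real) \<Rightarrow> ('s \<Rightarrow> real^'a) \<Rightarrow> nat \<Rightarrow> 's \<Rightarrow> 's \<Rightarrow> real" where
  "state_dist P \<pi> 0 s0 = (\<lambda>s. if s = s0 then 1 else 0)"
| "state_dist P \<pi> (Suc t) s0 = (\<lambda>s'. \<Sum>s\<in>UNIV. state_dist P \<pi> t s0 s * Ppi P \<pi> s s')"

text \<open>V_s(pi) = E[ sum_t gamma^t R(s_t,a_t) | s_0 = s ], written out:
  E[R(s_t,a_t) | s_0] = sum_s Pr(s_t = s) * sum_a pi_s(a) R(s,a).\<close>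
definition Vf :: "('s::finite \<Rightarrow> 'a::finite \<Rightarrow> 's \<Rightarrow> real) \<Rightarrow> ('s \<Rightarrow> 'a \<Rightarrow> real) \<Rightarrow> real \<Rightarrow> ('s \<Rightarrow> real^'a) \<Rightarrow> 's \<Rightarrow> real" where
  "Vf P R \<gamma> \<pi> s0 = (\<Sum>t. \<gamma> ^ t * (\<Sum>s\<in>UNIV. state_dist P \<pi> t s0 s * rpi R \<pi> s))"

definition Vrho :: "('s::finite \<Rightarrow> 'a::finite \<Rightarrow> 's \<Rightarrow> real) \<Rightarrow> ('s \<Rightarrow> 'a \<Rightarrow> real) \<Rightarrow> real \<Rightarrow> ('s \<Rightarrow> real^'a) \<Rightarrow> ('s \<Rightarrow> real) \<Rightarrow> real" where
  "Vrho P R \<gamma> \<pi> \<rho> = (\<Sum>s\<in>UNIV. \<rho> s * Vf P R \<gamma> \<pi> s)"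

definition Qf :: "('s::finite \<Rightarrow> 'a::finite \<Rightarrow> 's \<Rightarrow> real) \<Rightarrow> ('s \<Rightarrow> 'a \<Rightarrow> real) \<Rightarrow> real \<Rightarrow> ('s \<Rightarrow> real^'a) \<Rightarrow> 's \<Rightarrow> real^'a" where
  "Qf P R \<gamma> \<pi> s = (\<chi> a. R s a + \<gamma> * (\<Sum>s'\<in>UNIV. P s a s' * Vf P R \<gamma> \<pi> s'))"

definition prob_dist :: "('s::finite \<Rightarrow> real) \<Rightarrow> bool" where
  "prob_dist \<rho> \<longleftrightarrow> (\<forall>s. 0 \<le> \<rho> s) \<and> (\<Sum>s\<in>UNIV. \<rho> s) = 1"

definition edom :: "('n \<Rightarrow> ereal) \<Rightarrow> 'n set" where
  "edom h = {x. h x < \<infinity>}"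

text \<open>Real-valued restriction (meaningful on edom h for proper h).\<close>
definition hr :: "('n \<Rightarrow> ereal) \<Rightarrow> 'n \<Rightarrow> real" where
  "hr h x = real_of_ereal (h x)"

definition grad :: "(real^'n::finite \<Rightarrow> ereal) \<Rightarrow> real^'n \<Rightarrow> real^'n" where
  "grad h x = (SOME g. (hr h has_derivative (\<lambda>v. g \<bullet> v)) (at x))"

definition proper_convex :: "(real^'n::finite \<Rightarrow> ereal) \<Rightarrow> bool" where
  "proper_convex h \<longleftrightarrow> (\<forall>x. h x > -\<infinity>) \<and> edom h \<noteq> {} \<and>
     convex (edom h) \<and> convex_on (edom h) (hr h)"

text \<open>Closed = lower semicontinuous = closed epigraph.\<close>
definition closed_fun :: "(real^'n::finite \<Rightarrow> ereal) \<Rightarrow> bool" where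
  "closed_fun h \<longleftrightarrow> closed {(x, t::real). h x \<le> ereal t}"

definition essentially_smooth :: "(real^'n::finite \<Rightarrow> ereal) \<Rightarrow> bool" where
  "essentially_smooth h \<longleftrightarrow>
     interior (edom h) \<noteq> {} \<and>
     (\<forall>x\<in>interior (edom h). \<exists>g. (hr h has_derivative (\<lambda>v. g \<bullet> v)) (at x)) \<and>
     (\<forall>X x. (\<forall>i. X i \<in> interior (edom h)) \<longrightarrow> X \<longlonglongrightarrow> x \<longrightarrow> x \<in> frontier (interior (edom h)) \<longrightarrow>
        filterlim (\<lambda>i. norm (grad h (X i))) at_top sequentially)"

definition strictly_convex_on :: "'n::real_vector set \<Rightarrow> ('n \<Rightarrow> real) \<Rightarrow> bool" where
  "strictly_convex_on S f \<longleftrightarrow>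
     (\<forall>x\<in>S. \<forall>y\<in>S. x \<noteq> y \<longrightarrow> (\<forall>u::real. 0 < u \<and> u < 1 \<longrightarrow>
        f (u *\<^sub>R x + (1 - u) *\<^sub>R y) < u * f x + (1 - u) * f y))"

definition legendre :: "(real^'n::finite \<Rightarrow> ereal) \<Rightarrow> bool" where
  "legendre h \<longleftrightarrow> proper_convex h \<and> closed_fun h \<and> essentially_smooth h \<and>
     strictly_convex_on (rel_interior (edom h)) (hr h)"

definition bregman :: "(real^'n::finite \<Rightarrow> ereal) \<Rightarrow> real^'n \<Rightarrow> real^'n \<Rightarrow> ereal" where
  "bregman h p p' = h p - h p' - ereal (grad h p' \<bullet> (p - p'))"

end

theory Submission
  imports Defs
begin


lemma Ppi_nonneg: "is_mdp P R \<gamma> \<Longrightarrow> is_policy \<pi> \<Longrightarrow> 0 \<le> Ppi P \<pi> s s'"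
  unfolding Ppi_def is_mdp_def is_policy_def act_simplex_def
  by (auto intro!: sum_nonneg mult_nonneg_nonneg)

lemma Ppi_sum: "is_mdp P R \<gamma> \<Longrightarrow> is_policy \<pi> \<Longrightarrow> (\<Sum>s'\<in>UNIV. Ppi P \<pi> s s') = 1"
proof -
  assume m: "is_mdp P R \<gamma>" and p: "is_policy \<pi>"
  have "(\<Sum>s'\<in>UNIV. Ppi P \<pi> s s') = (\<Sum>a\<in>UNIV. \<pi> s $ a * (\<Sum>s'\<in>UNIV. P s a s'))"
    unfolding Ppi_def by (subst sum.swap) (simp add: sum_distrib_left)
  also have "\<dots> = 1" using m p by (simp add: is_mdp_def is_policy_def act_simplex_def)
  finally show ?thesis .
qed

lemma sd_nonneg: "is_mdp P R \<gamma> \<Longrightarrow> is_policy \<pi> \<Longrightarrow> 0 \<le> state_dist P \<pi> t s0 s"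
  by (induction t arbitrary: s) (auto intro!: sum_nonneg mult_nonneg_nonneg Ppi_nonneg)

lemma sd_sum: "is_mdp P R \<gamma> \<Longrightarrow> is_policy \<pi> \<Longrightarrow> (\<Sum>s\<in>UNIV. state_dist P \<pi> t s0 s) = 1"
proof (induction t)
  case 0
  then show ?case by simp
next
  case (Suc t)
  have "(\<Sum>s\<in>UNIV. state_dist P \<pi> (Suc t) s0 s) = (\<Sum>s\<in>UNIV. state_dist P \<pi> t s0 s * (\<Sum>s'\<in>UNIV. Ppi P \<pi> s s'))"
    by (simp only: state_dist.simps, subst sum.swap) (simp add: sum_distrib_left)
  also have "\<dots> = 1" using Suc by (simp add: Ppi_sum)
  finally show ?case .
qed

lemma delta_mult: "(\<Sum>s\<in>(UNIV::'s::finite set). (if s = s0 then 1 else 0) * (f s::real)) = f s0"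
  by (simp add: if_distrib[of "\<lambda>x. x * _"] cong: if_cong)

lemma sd_ck: "state_dist P \<pi> (Suc t) s0 s' = (\<Sum>s1\<in>UNIV. Ppi P \<pi> s0 s1 * state_dist P \<pi> t s1 s')"
proof (induction t arbitrary: s')
  case 0
  then show ?case by (simp add: delta_mult if_distrib[of "\<lambda>x. _ * x"] cong: if_cong)
next
  case (Suc t)
  have "state_dist P \<pi> (Suc (Suc t)) s0 s' = (\<Sum>s\<in>UNIV. (\<Sum>s1\<in>UNIV. Ppi P \<pi> s0 s1 * state_dist P \<pi> t s1 s) * Ppi P \<pi> s s')"
    using Suc by simp
  also have "\<dots> = (\<Sum>s1\<in>UNIV. Ppi P \<pi> s0 s1 * (\<Sum>s\<in>UNIV. state_dist P \<pi> t s1 s * Ppi P \<pi> s s'))"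
    by (simp only: sum_distrib_left sum_distrib_right, subst sum.swap) (simp add: mult.assoc)
  finally show ?case by simp
qed

definition ft where "ft P R \<pi> t s0 = (\<Sum>s\<in>UNIV. state_dist P \<pi> t s0 s * rpi R \<pi> s)"

lemma rpi_bounds: "is_mdp P R \<gamma> \<Longrightarrow> is_policy \<pi> \<Longrightarrow> 0 \<le> rpi R \<pi> s \<and> rpi R \<pi> s \<le> 1"
proof -
  assume m: "is_mdp P R \<gamma>" and p: "is_policy \<pi>"
  have "rpi R \<pi> s \<le> (\<Sum>a\<in>UNIV. \<pi> s $ a * 1)" unfolding rpi_def
    using m p by (intro sum_mono mult_left_mono) (auto simp: is_mdp_def is_policy_def act_simplex_def)
  also have "\<dots> = 1" using p by (simp add: is_policy_def act_simplex_def)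
  finally show ?thesis using m p unfolding rpi_def
    by (auto intro!: sum_nonneg mult_nonneg_nonneg simp: is_mdp_def is_policy_def act_simplex_def)
qed

lemma ft_bounds: "is_mdp P R \<gamma> \<Longrightarrow> is_policy \<pi> \<Longrightarrow> 0 \<le> ft P R \<pi> t s0 \<and> ft P R \<pi> t s0 \<le> 1"
proof -
  assume m: "is_mdp P R \<gamma>" and p: "is_policy \<pi>"
  have "ft P R \<pi> t s0 \<le> (\<Sum>s\<in>UNIV. state_dist P \<pi> t s0 s * 1)" unfolding ft_def
    using rpi_bounds[OF m p] sd_nonneg[OF m p] by (intro sum_mono mult_left_mono) auto
  also have "\<dots> = 1" using m p by (simp add: sd_sum)
  finally have "ft P R \<pi> t s0 \<le> 1" .
  moreover have "0 \<le> ft P R \<pi> t s0" unfolding ft_def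
    by (intro sum_nonneg mult_nonneg_nonneg sd_nonneg[OF m p]) (use rpi_bounds[OF m p] in blast)
  ultimately show ?thesis by simp
qed

lemma ft_Suc: "ft P R \<pi> (Suc t) s0 = (\<Sum>s1\<in>UNIV. Ppi P \<pi> s0 s1 * ft P R \<pi> t s1)"
  unfolding ft_def sd_ck
  by (simp only: sum_distrib_left sum_distrib_right, subst sum.swap) (simp add: mult.assoc)

lemma ft_summable: "is_mdp P R \<gamma> \<Longrightarrow> is_policy \<pi> \<Longrightarrow> summable (\<lambda>t. \<gamma> ^ t * ft P R \<pi> t s0)"
proof -
  assume m: "is_mdp P R \<gamma>" and p: "is_policy \<pi>"
  have g: "0 \<le> \<gamma>" "\<gamma> < 1" using m by (auto simp: is_mdp_def)
  show ?thesis
  proof (rule summable_comparison_test[OF _ summable_geometric[of \<gamma>]])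
    show "\<exists>N. \<forall>n\<ge>N. norm (\<gamma> ^ n * ft P R \<pi> n s0) \<le> \<gamma> ^ n"
      using ft_bounds[OF m p] g by (auto simp: abs_mult intro!: mult_left_le)
  qed (use g in auto)
qed

lemma Vf_ft: "Vf P R \<gamma> \<pi> s0 = (\<Sum>t. \<gamma> ^ t * ft P R \<pi> t s0)"
  unfolding Vf_def ft_def ..

lemma bellman: "is_mdp P R \<gamma> \<Longrightarrow> is_policy \<pi> \<Longrightarrow>
  Vf P R \<gamma> \<pi> s0 = rpi R \<pi> s0 + \<gamma> * (\<Sum>s1\<in>UNIV. Ppi P \<pi> s0 s1 * Vf P R \<gamma> \<pi> s1)"
proof -
  assume m: "is_mdp P R \<gamma>" and p: "is_policy \<pi>"
  note S = ft_summable[OF m p]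
  have "(\<Sum>t. \<gamma> ^ Suc t * ft P R \<pi> (Suc t) s0) = (\<Sum>t. \<gamma> * (\<Sum>s1\<in>UNIV. Ppi P \<pi> s0 s1 * (\<gamma> ^ t * ft P R \<pi> t s1)))"
    by (simp add: ft_Suc sum_distrib_left mult_ac)
  also have "\<dots> = \<gamma> * (\<Sum>t. (\<Sum>s1\<in>UNIV. Ppi P \<pi> s0 s1 * (\<gamma> ^ t * ft P R \<pi> t s1)))"
    by (rule suminf_mult) (intro summable_sum summable_mult S)
  also have "(\<Sum>t. (\<Sum>s1\<in>UNIV. Ppi P \<pi> s0 s1 * (\<gamma> ^ t * ft P R \<pi> t s1))) = (\<Sum>s1\<in>UNIV. (\<Sum>t. Ppi P \<pi> s0 s1 * (\<gamma> ^ t * ft P R \<pi> t s1)))"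
    by (rule suminf_sum) (intro summable_mult S)
  also have "\<dots> = (\<Sum>s1\<in>UNIV. Ppi P \<pi> s0 s1 * Vf P R \<gamma> \<pi> s1)"
    unfolding Vf_ft by (intro sum.cong refl suminf_mult S)
  finally have *: "(\<Sum>t. \<gamma> ^ Suc t * ft P R \<pi> (Suc t) s0) = \<gamma> * (\<Sum>s1\<in>UNIV. Ppi P \<pi> s0 s1 * Vf P R \<gamma> \<pi> s1)" .
  have "Vf P R \<gamma> \<pi> s0 = \<gamma> ^ 0 * ft P R \<pi> 0 s0 + (\<Sum>t. \<gamma> ^ Suc t * ft P R \<pi> (Suc t) s0)"
    unfolding Vf_ft using suminf_split_head[OF S[of s0]] by simp
  also have "\<gamma> ^ 0 * ft P R \<pi> 0 s0 = rpi R \<pi> s0" by (simp add: ft_def delta_mult)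
  finally show ?thesis using * by simp
qed


lemma Q_inner: "Qf P R \<gamma> \<pi> s \<bullet> p = rpi R (\<lambda>_. p) s + \<gamma> * (\<Sum>s'\<in>UNIV. Ppi P (\<lambda>_. p) s s' * Vf P R \<gamma> \<pi> s')"
proof -
  have "Qf P R \<gamma> \<pi> s \<bullet> p = (\<Sum>a\<in>UNIV. p$a * R s a + \<gamma> * (\<Sum>s'\<in>UNIV. p$a * P s a s' * Vf P R \<gamma> \<pi> s'))"
    unfolding Qf_def inner_vec_def by (intro sum.cong) (simp_all add: sum_distrib_left algebra_simps)
  also have "\<dots> = (\<Sum>a\<in>UNIV. p$a * R s a) + \<gamma> * (\<Sum>a\<in>UNIV. \<Sum>s'\<in>UNIV. p$a * P s a s' * Vf P R \<gamma> \<pi> s')"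
    by (simp add: sum.distrib sum_distrib_left)
  also have "(\<Sum>a\<in>UNIV. \<Sum>s'\<in>UNIV. p$a * P s a s' * Vf P R \<gamma> \<pi> s') = (\<Sum>s'\<in>UNIV. Ppi P (\<lambda>_. p) s s' * Vf P R \<gamma> \<pi> s')"
    unfolding Ppi_def by (subst sum.swap) (simp add: sum_distrib_right)
  finally show ?thesis unfolding rpi_def by simp
qed

lemma rpi_const: "rpi R (\<lambda>_. \<pi> s) s = rpi R \<pi> s" by (simp add: rpi_def)
lemma Ppi_const: "Ppi P (\<lambda>_. \<pi> s) s s' = Ppi P \<pi> s s'" by (simp add: Ppi_def)

lemma improve:
  assumes m: "is_mdp P R \<gamma>" and p: "is_policy \<pi>" and p': "is_policy \<pi>'"
    and c: "\<forall>s. Qf P R \<gamma> \<pi> s \<bullet> (\<pi>' s - \<pi> s) \<le> c"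
  shows "Vf P R \<gamma> \<pi>' s - Vf P R \<gamma> \<pi> s \<le> c / (1 - \<gamma>)"
proof -
  have g: "0 \<le> \<gamma>" "\<gamma> < 1" using m by (auto simp: is_mdp_def)
  define D where "D = (\<lambda>s. Vf P R \<gamma> \<pi>' s - Vf P R \<gamma> \<pi> s)"
  define M where "M = Max (range D)"
  have DM: "D s \<le> M" for s unfolding M_def by (rule Max_ge) auto
  have step: "D s \<le> c + \<gamma> * M" for s
  proof -
    have e1: "Vf P R \<gamma> \<pi> s = Qf P R \<gamma> \<pi> s \<bullet> \<pi> s"
      using bellman[OF m p, of s] by (simp add: Q_inner rpi_const Ppi_const)
    have e2: "Qf P R \<gamma> \<pi> s \<bullet> \<pi>' s = rpi R \<pi>' s + \<gamma> * (\<Sum>s'\<in>UNIV. Ppi P \<pi>' s s' * Vf P R \<gamma> \<pi> s')"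
      by (simp add: Q_inner rpi_const Ppi_const)
    have "D s = Qf P R \<gamma> \<pi> s \<bullet> (\<pi>' s - \<pi> s) + \<gamma> * (\<Sum>s'\<in>UNIV. Ppi P \<pi>' s s' * D s')"
      unfolding D_def inner_diff_right e2 using bellman[OF m p', of s] e1
      by (simp add: algebra_simps sum_subtractf)
    also have "(\<Sum>s'\<in>UNIV. Ppi P \<pi>' s s' * D s') \<le> (\<Sum>s'\<in>UNIV. Ppi P \<pi>' s s' * M)"
      by (intro sum_mono mult_left_mono DM Ppi_nonneg[OF m p'])
    also have "\<dots> = M" by (simp add: sum_distrib_right[symmetric] Ppi_sum[OF m p'])
    finally show ?thesis using c g(1) by (smt (verit) mult_left_mono)
  qed
  have "M \<in> range D" unfolding M_def by (rule Max_in) auto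
  then obtain s0 where "M = D s0" by auto
  with step[of s0] have "M * (1 - \<gamma>) \<le> c" by (simp add: algebra_simps)
  hence "M \<le> c / (1 - \<gamma>)" using g by (simp add: pos_le_divide_eq)
  with DM[of s] show ?thesis unfolding D_def by simp
qed



lemma leg_facts:
  assumes "legendre h"
  shows "convex (edom h)" "convex_on (edom h) (hr h)" "interior (edom h) \<noteq> {}" "\<And>x. h x > -\<infinity>"
    "\<And>x. x \<in> interior (edom h) \<Longrightarrow> (hr h has_derivative (\<lambda>v. grad h x \<bullet> v)) (at x)"
proof -
  show "convex (edom h)" "convex_on (edom h) (hr h)" "interior (edom h) \<noteq> {}" "\<And>x. h x > -\<infinity>"
    using assms by (auto simp: legendre_def proper_convex_def essentially_smooth_def)
  fix x assume x: "x \<in> interior (edom h)"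
  then have ex: "\<exists>g. (hr h has_derivative (\<lambda>v. g \<bullet> v)) (at x)"
    using assms by (auto simp: legendre_def essentially_smooth_def)
  show "(hr h has_derivative (\<lambda>v. grad h x \<bullet> v)) (at x)"
    unfolding grad_def by (rule someI_ex[OF ex])
qed

lemma tangent:
  assumes leg: "legendre h" and x: "x \<in> interior (edom h)" and y: "y \<in> edom h"
  shows "hr h x + grad h x \<bullet> (y - x) \<le> hr h y"
proof -
  note L = leg_facts[OF leg]
  define d where "d = y - x"
  define A where "A = {t::real. x + t *\<^sub>R d \<in> edom h}"
  define f where "f = (\<lambda>t. hr h (x + t *\<^sub>R d))"
  have aff: "x + ((1 - u) * a + u * b) *\<^sub>R d = (1 - u) *\<^sub>R (x + a *\<^sub>R d) + u *\<^sub>R (x + b *\<^sub>R d)" for u a b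
    by (simp add: algebra_simps)
  have cA: "convex A" unfolding convex_alt A_def
  proof (intro ballI allI impI, simp)
    fix a b u :: real assume "x + a *\<^sub>R d \<in> edom h" "x + b *\<^sub>R d \<in> edom h" "0 \<le> u \<and> u \<le> 1"
    then show "x + ((1 - u) * a + u * b) *\<^sub>R d \<in> edom h"
      unfolding aff using L(1) by (simp add: convex_alt)
  qed
  have fA: "convex_on A f"
  proof (rule convex_onI[OF _ cA])
    fix u a b :: real assume u: "0 < u" "u < 1" and ab: "a \<in> A" "b \<in> A"
    show "f ((1 - u) *\<^sub>R a + u *\<^sub>R b) \<le> (1 - u) * f a + u * f b"
      unfolding f_def using ab u convex_onD[OF L(2), of u "x + a *\<^sub>R d" "x + b *\<^sub>R d"]
      by (simp add: aff A_def)
  qed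
  have "open ((\<lambda>t::real. x + t *\<^sub>R d) -` interior (edom h))"
    by (rule continuous_open_vimage[OF open_interior]) (intro continuous_intros)
  hence "open {t::real. x + t *\<^sub>R d \<in> interior (edom h)}" by (simp add: vimage_def)
  moreover have "{t::real. x + t *\<^sub>R d \<in> interior (edom h)} \<subseteq> A"
    unfolding A_def using interior_subset by auto
  ultimately have "{t::real. x + t *\<^sub>R d \<in> interior (edom h)} \<subseteq> interior A"
    by (simp add: interior_maximal)
  hence c0: "0 \<in> interior A" using x by auto
  have y1: "1 \<in> A" unfolding A_def d_def using y by simp
  have d1: "((\<lambda>t::real. x + t *\<^sub>R d) has_derivative (\<lambda>t. t *\<^sub>R d)) (at 0 within A)"
    by (intro derivative_eq_intros) auto
  have d2: "(hr h has_derivative (\<lambda>v. grad h x \<bullet> v)) (at (x + 0 *\<^sub>R d))"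
    using L(5)[OF x] by simp
  have "(f has_derivative (\<lambda>t. grad h x \<bullet> (t *\<^sub>R d))) (at 0 within A)"
    unfolding f_def using has_derivative_compose[OF d1 d2] by simp
  moreover have "(\<lambda>t. grad h x \<bullet> (t *\<^sub>R d)) = (*) (grad h x \<bullet> d)"
    by (auto simp: fun_eq_iff)
  ultimately have "(f has_field_derivative (grad h x \<bullet> d)) (at 0 within A)"
    unfolding has_field_derivative_def by simp
  from convex_on_imp_above_tangent[OF fA convex_connected[OF cA] c0 y1 this]
  show ?thesis unfolding f_def d_def by simp
qed

lemma h_fin: "legendre h \<Longrightarrow> p \<in> edom h \<Longrightarrow> h p = ereal (hr h p)"
  using leg_facts(4)[of h p] by (cases "h p") (auto simp: edom_def hr_def)

lemma breg_eq: "legendre h \<Longrightarrow> p \<in> edom h \<Longrightarrow> q \<in> edom h \<Longrightarrow>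
  bregman h p q = ereal (hr h p - hr h q - grad h q \<bullet> (p - q))"
  unfolding bregman_def by (simp add: h_fin)

lemma simplex_comb: "x \<in> act_simplex \<Longrightarrow> q \<in> act_simplex \<Longrightarrow> 0 \<le> l \<Longrightarrow> l \<le> 1 \<Longrightarrow>
  x + l *\<^sub>R (q - x) \<in> act_simplex"
proof -
  assume x: "x \<in> act_simplex" and q: "q \<in> act_simplex" and l: "0 \<le> l" "l \<le> 1"
  have "x + l *\<^sub>R (q - x) = (1 - l) *\<^sub>R x + l *\<^sub>R q" by (simp add: algebra_simps)
  moreover have "(1 - l) *\<^sub>R x + l *\<^sub>R q \<in> act_simplex"
    using x q l unfolding act_simplex_def
    by (auto simp: sum.distrib sum_distrib_left[symmetric])
  ultimately show ?thesis by simp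
qed

lemma pos_rel_interior:
  assumes "p \<in> act_simplex" "\<forall>a. 0 < p $ a"
  shows "p \<in> rel_interior act_simplex"
proof -
  define e where "e = Min (range (\<lambda>a. p $ a))"
  have e0: "e > 0" unfolding e_def using assms(2) by (subst Min_gr_iff) auto
  have ea: "e \<le> p $ a" for a unfolding e_def by (rule Min_le) auto
  have "affine {y::real^'a. (\<chi> a. 1) \<bullet> y = 1}" by (rule affine_hyperplane)
  moreover have "act_simplex \<subseteq> {y::real^'a. (\<chi> a. 1) \<bullet> y = 1}"
    by (auto simp: act_simplex_def inner_vec_def)
  ultimately have aff: "affine hull act_simplex \<subseteq> {y::real^'a. (\<chi> a. 1) \<bullet> y = 1}"
    by (intro hull_minimal)
  have "ball p e \<inter> affine hull act_simplex \<subseteq> act_simplex"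
  proof
    fix y assume y: "y \<in> ball p e \<inter> affine hull act_simplex"
    have "0 \<le> y $ a" for a
    proof -
      have "\<bar>p $ a - y $ a\<bar> \<le> norm (p - y)"
        using component_le_norm_cart[of "p - y" a] by simp
      also have "\<dots> < e" using y by (simp add: dist_norm)
      finally show ?thesis using ea[of a] by simp
    qed
    moreover have "(\<Sum>a\<in>UNIV. y $ a) = 1" using y aff by (auto simp: inner_vec_def)
    ultimately show "y \<in> act_simplex" by (simp add: act_simplex_def)
  qed
  then show ?thesis using assms(1) e0 by (auto simp: mem_rel_interior_ball)
qed


lemma argmin_interior:
  fixes c :: "real^'a::finite"
  assumes leg: "legendre h" and dom: "act_simplex \<subseteq> edom h"
    and q: "q \<in> interior (edom h)" "q \<in> act_simplex"
    and x: "x \<in> act_simplex"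
    and min: "\<And>p. p \<in> act_simplex \<Longrightarrow> c \<bullet> x + hr h x - grad h q \<bullet> x \<le> c \<bullet> p + hr h p - grad h q \<bullet> p"
  shows "x \<in> interior (edom h)"
proof (rule ccontr)
  assume nx: "x \<notin> interior (edom h)"
  note L = leg_facts[OF leg]
  define g0 where "g0 = grad h q"
  define xl where "xl = (\<lambda>l::real. x + l *\<^sub>R (q - x))"
  have xE: "x \<in> edom h" using x dom by auto
  have xcl: "x \<in> closure (edom h)" using xE closure_subset by auto
  have xl_int: "xl l \<in> interior (edom h)" if "0 < l" "l \<le> 1" for l
  proof -
    have "x - l *\<^sub>R (x - q) \<in> interior (edom h)"
      by (rule mem_interior_closure_convex_shrink[OF L(1) q(1) xcl that])
    moreover have "x - l *\<^sub>R (x - q) = xl l" by (simp add: xl_def algebra_simps)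
    ultimately show ?thesis by simp
  qed
  have xl_simp: "xl l \<in> act_simplex" if "0 \<le> l" "l \<le> 1" for l
    using simplex_comb[OF x q(2) that] by (simp add: xl_def)
  define K where "K = (c - g0) \<bullet> (q - x)"
  have lowG: "- K \<le> grad h (xl l) \<bullet> (q - x)" if l: "0 < l" "l \<le> 1" for l
  proof -
    have t: "hr h (xl l) + grad h (xl l) \<bullet> (x - xl l) \<le> hr h x"
      using tangent[OF leg xl_int[OF l] xE] .
    have "x - xl l = - l *\<^sub>R (q - x)" by (simp add: xl_def)
    hence t': "hr h (xl l) - l * (grad h (xl l) \<bullet> (q - x)) \<le> hr h x" using t by simp
    have m: "c \<bullet> x + hr h x - g0 \<bullet> x \<le> c \<bullet> xl l + hr h (xl l) - g0 \<bullet> xl l"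
      using min[OF xl_simp] l unfolding g0_def by simp
    have eq: "c \<bullet> xl l - g0 \<bullet> xl l = c \<bullet> x - g0 \<bullet> x + l * K"
      unfolding xl_def K_def by (simp add: inner_simps algebra_simps)
    have "l * (-K) \<le> l * (grad h (xl l) \<bullet> (q - x))" using t' m eq by simp
    thus ?thesis using mult_le_cancel_left_pos[OF l(1)] by blast
  qed
  obtain e where e: "e > 0" "cball q e \<subseteq> interior (edom h)"
    using open_contains_cball q(1) open_interior by blast
  have cont: "continuous_on (cball q e) (hr h)"
    using e(2) by (intro continuous_at_imp_continuous_on ballI has_derivative_continuous[OF L(5)]) auto
  then have "bounded (hr h ` cball q e)" by (intro compact_imp_bounded compact_continuous_image) auto
  then obtain B where B: "\<forall>y\<in>hr h ` cball q e. norm y \<le> B" by (auto simp: bounded_iff)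
  have M1: "hr h z \<le> B" if "z \<in> cball q e" for z 
  proof -
    have "norm (hr h z) \<le> B" using B that by blast
    thus ?thesis by simp
  qed
  define M where "M = B - hr h q + \<bar>g0 \<bullet> (x - q)\<bar>"
  have M0: "0 \<le> M" unfolding M_def using M1[of q] e(1) by simp
  have upG: "e * norm (grad h (xl l)) \<le> M + \<bar>K\<bar>" if l: "0 < l" "l \<le> 1" for l
  proof (cases "grad h (xl l) = 0")
    case True then show ?thesis using M0 by simp
  next
    case False
    define G where "G = grad h (xl l)"
    have G0: "norm G > 0" using False by (simp add: G_def)
    define z where "z = q + (e / norm G) *\<^sub>R G"
    have zc: "z \<in> cball q e" using e(1) G0 by (simp add: z_def dist_norm)
    have zE: "z \<in> edom h" using zc e(2) interior_subset by blast
    have t1: "hr h (xl l) + G \<bullet> (z - xl l) \<le> hr h z"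
      using tangent[OF leg xl_int[OF l] zE] by (simp add: G_def)
    have xlE: "xl l \<in> edom h" using xl_int[OF l] interior_subset by blast
    have t2: "hr h q + g0 \<bullet> (xl l - q) \<le> hr h (xl l)"
      using tangent[OF leg q(1) xlE] unfolding g0_def .
    have e1: "g0 \<bullet> (xl l - q) = (1 - l) * (g0 \<bullet> (x - q))"
      unfolding xl_def by (simp add: inner_simps algebra_simps)
    have a1: "\<bar>(1 - l) * (g0 \<bullet> (x - q))\<bar> \<le> \<bar>g0 \<bullet> (x - q)\<bar>"
      using l by (simp add: abs_mult mult_left_le_one_le)
    have "G \<bullet> ((e / norm G) *\<^sub>R G) = e / norm G * (norm G)^2"
      by (simp add: power2_norm_eq_inner)
    also have "\<dots> = e * norm G" using G0 by (simp add: power2_eq_square)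
    finally have e2: "G \<bullet> (z - xl l) = G \<bullet> (q - xl l) + e * norm G"
      unfolding z_def by (simp add: inner_simps)
    have e3: "G \<bullet> (q - xl l) = (1 - l) * (G \<bullet> (q - x))"
      unfolding xl_def by (simp add: inner_simps algebra_simps)
    have "(1 - l) * (- K) \<le> (1 - l) * (G \<bullet> (q - x))"
      using lowG[OF l] l by (intro mult_left_mono) (auto simp: G_def)
    moreover have "\<bar>(1 - l) * K\<bar> \<le> \<bar>K\<bar>"
      using l by (simp add: abs_mult mult_left_le_one_le)
    ultimately have a2: "- \<bar>K\<bar> \<le> G \<bullet> (q - xl l)" using e3 by linarith
    show ?thesis using t1 t2 e1 a1 e2 a2 M1[OF zc] unfolding M_def G_def[symmetric] by linarith
  qed
  define X where "X = (\<lambda>i. xl (inverse (real (Suc i))))"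
  have Xint: "\<forall>i. X i \<in> interior (edom h)"
    unfolding X_def by (intro allI xl_int) (auto simp: field_simps)
  have "(\<lambda>i. x + inverse (real (Suc i)) *\<^sub>R (q - x)) \<longlonglongrightarrow> x + 0 *\<^sub>R (q - x)"
    by (intro tendsto_intros LIMSEQ_inverse_real_of_nat)
  hence Xlim: "X \<longlonglongrightarrow> x" by (simp add: X_def xl_def)
  have "x \<in> frontier (interior (edom h))"
    unfolding frontier_def convex_closure_interior[OF L(1) L(3)] interior_interior
    using xcl nx by simp
  with Xint Xlim leg have "filterlim (\<lambda>i. norm (grad h (X i))) at_top sequentially"
    by (auto simp: legendre_def essentially_smooth_def)
  hence "\<forall>\<^sub>F i in sequentially. (M + \<bar>K\<bar>) / e + 1 \<le> norm (grad h (X i))"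
    by (simp add: filterlim_at_top)
  then obtain N where N: "(M + \<bar>K\<bar>) / e + 1 \<le> norm (grad h (X N))"
    by (auto simp: eventually_sequentially)
  have "e * norm (grad h (X N)) \<le> M + \<bar>K\<bar>"
    unfolding X_def by (rule upG) (auto simp: field_simps)
  hence "norm (grad h (X N)) \<le> (M + \<bar>K\<bar>) / e" using e(1) by (simp add: pos_le_divide_eq mult.commute)
  with N show False by simp
qed


theorem lemma12:
  fixes P :: "'s::finite \<Rightarrow> 'a::finite \<Rightarrow> 's \<Rightarrow> real"
    and R :: "'s \<Rightarrow> 'a \<Rightarrow> real"
    and \<gamma> :: real
    and h :: "real^'a \<Rightarrow> ereal"
    and \<pi> :: "nat \<Rightarrow> 's \<Rightarrow> real^'a"
    and Qhat :: "nat \<Rightarrow> 's \<Rightarrow> real^'a"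
    and \<eta> :: "nat \<Rightarrow> real"
    and \<tau> :: real
  assumes mdp: "is_mdp P R \<gamma>"
    and leg: "legendre h"
    and dom_simplex: "act_simplex \<subseteq> edom h"
    and rint_simplex: "rel_interior act_simplex \<subseteq> rel_interior (edom h)"
    and init: "rint_policy (\<pi> 0)"
    and step_pos: "\<forall>k. 0 < \<eta> k"
    and update: "\<forall>k s. is_arg_min
        (\<lambda>p. ereal (\<eta> k * (Qhat k s \<bullet> p)) + bregman h p (\<pi> k s))
        (\<lambda>p. p \<in> act_simplex) (\<pi> (Suc k) s)"
    and err: "\<forall>k s a. \<bar>Qhat k s $ a - Qf P R \<gamma> (\<pi> k) s $ a\<bar> \<le> \<tau>"
  shows "\<forall>k. (\<forall>s. Qhat k s \<bullet> (\<pi> (Suc k) s - \<pi> k s) \<le> 0) \<and>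
             (\<forall>\<rho>. prob_dist \<rho> \<longrightarrow>
                Vrho P R \<gamma> (\<pi> (Suc k)) \<rho> - Vrho P R \<gamma> (\<pi> k) \<rho> \<le> 2 / (1 - \<gamma>) * \<tau>)"
  proof -
  note L = leg_facts[OF leg]
  have rint_int: "rel_interior act_simplex \<subseteq> interior (edom h)"
    using rint_simplex rel_interior_nonempty_interior[OF L(3)] by simp
  have stepfacts: "\<pi> (Suc k) s \<in> act_simplex \<and> \<pi> (Suc k) s \<in> interior (edom h) \<and>
      Qhat k s \<bullet> (\<pi> (Suc k) s - \<pi> k s) \<le> 0"
    if q: "\<pi> k s \<in> act_simplex" "\<pi> k s \<in> interior (edom h)" for k s
  proof -
    define x where "x = \<pi> (Suc k) s"
    define y where "y = \<pi> k s"
    define Q where "Q = Qhat k s"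
    define g where "g = grad h y"
    have am: "x \<in> act_simplex" and am2: "\<And>p. p \<in> act_simplex \<Longrightarrow>
        \<not> (ereal (\<eta> k * (Q \<bullet> p)) + bregman h p y < ereal (\<eta> k * (Q \<bullet> x)) + bregman h x y)"
      using update unfolding is_arg_min_def x_def y_def Q_def by blast+
    have yE: "y \<in> edom h" using q(2) interior_subset unfolding y_def by blast
    have xE: "x \<in> edom h" using am dom_simplex by blast
    have le: "\<eta> k * (Q \<bullet> x) + (hr h x - hr h y - g \<bullet> (x - y)) \<le> \<eta> k * (Q \<bullet> p) + (hr h p - hr h y - g \<bullet> (p - y))"
      if p: "p \<in> act_simplex" for p
    proof -
      have pE: "p \<in> edom h" using p dom_simplex by blast
      show ?thesis using am2[OF p] unfolding breg_eq[OF leg pE yE] breg_eq[OF leg xE yE] g_def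
        by simp
    qed
    have int: "x \<in> interior (edom h)"
    proof (rule argmin_interior[OF leg dom_simplex q(2,1) am[unfolded x_def], folded x_def y_def, where c = "\<eta> k *\<^sub>R Q"])
      fix p :: "real^'a" assume p: "p \<in> act_simplex"
      show "(\<eta> k *\<^sub>R Q) \<bullet> x + hr h x - grad h y \<bullet> x \<le> (\<eta> k *\<^sub>R Q) \<bullet> p + hr h p - grad h y \<bullet> p"
        using le[OF p] unfolding g_def by (simp add: inner_diff_right)
    qed
    have l1: "\<eta> k * (Q \<bullet> x) + (hr h x - hr h y - g \<bullet> (x - y)) \<le> \<eta> k * (Q \<bullet> y)"
      using le[OF q(1)[folded y_def]] by simp
    have t: "hr h y + g \<bullet> (x - y) \<le> hr h x" unfolding g_def y_def
      using tangent[OF leg q(2) xE] .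
    have "\<eta> k * (Q \<bullet> x - Q \<bullet> y) \<le> 0" using l1 t by (simp add: algebra_simps)
    hence "Q \<bullet> x - Q \<bullet> y \<le> 0" using step_pos by (simp add: mult_le_0_iff) (meson not_less)
    thus ?thesis using am int unfolding x_def y_def Q_def by (simp add: inner_diff_right)
  qed
  have inv: "\<forall>s. \<pi> k s \<in> act_simplex \<and> \<pi> k s \<in> interior (edom h)" for k
  proof (induction k)
    case 0
    show ?case
    proof
      fix s
      have a: "\<pi> 0 s \<in> act_simplex" "\<forall>a. 0 < \<pi> 0 s $ a"
        using init by (auto simp: rint_policy_def is_policy_def)
      show "\<pi> 0 s \<in> act_simplex \<and> \<pi> 0 s \<in> interior (edom h)"
        using a pos_rel_interior[OF a] rint_int by blast
    qed
  next
    case (Suc k)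
    then show ?case using stepfacts by blast
  qed
  have pol: "is_policy (\<pi> k)" for k using inv by (simp add: is_policy_def)
  have tau0: "0 \<le> \<tau>" using err by (meson abs_ge_zero order_trans)
  have g: "0 \<le> \<gamma>" "\<gamma> < 1" using mdp by (auto simp: is_mdp_def)
  show ?thesis
  proof (intro allI conjI impI)
    fix k s show "Qhat k s \<bullet> (\<pi> (Suc k) s - \<pi> k s) \<le> 0" using stepfacts inv by blast
  next
    fix k :: nat and \<rho> :: "'s \<Rightarrow> real" assume \<rho>: "prob_dist \<rho>"
    have c: "\<forall>s. Qf P R \<gamma> (\<pi> k) s \<bullet> (\<pi> (Suc k) s - \<pi> k s) \<le> 2 * \<tau>"
    proof
      fix s
      define d where "d = \<pi> (Suc k) s - \<pi> k s"
      define E where "E = Qf P R \<gamma> (\<pi> k) s - Qhat k s"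
      have s1: "\<pi> (Suc k) s \<in> act_simplex" "\<pi> k s \<in> act_simplex" using inv by blast+
      have "E \<bullet> d \<le> (\<Sum>a\<in>UNIV. \<tau> * (\<pi> (Suc k) s $ a + \<pi> k s $ a))"
        unfolding inner_vec_def
      proof (rule sum_mono)
        fix a
        have "E $ a \<bullet> d $ a \<le> \<bar>E $ a\<bar> * \<bar>d $ a\<bar>" by (simp add: abs_mult[symmetric])
        also have "\<dots> \<le> \<tau> * \<bar>d $ a\<bar>" using err unfolding E_def
          by (intro mult_right_mono) (auto simp: abs_minus_commute)
        also have "\<dots> \<le> \<tau> * (\<pi> (Suc k) s $ a + \<pi> k s $ a)"
        proof -
          have "\<bar>d $ a\<bar> \<le> \<pi> (Suc k) s $ a + \<pi> k s $ a"
            using s1 unfolding d_def act_simplex_def by (auto simp: abs_le_iff)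
          thus ?thesis by (intro mult_left_mono tau0)
        qed
        finally show "E $ a \<bullet> d $ a \<le> \<tau> * (\<pi> (Suc k) s $ a + \<pi> k s $ a)" .
      qed
      also have "\<dots> = 2 * \<tau>" using s1
        by (simp add: sum_distrib_left[symmetric] sum.distrib act_simplex_def)
      finally have "E \<bullet> d \<le> 2 * \<tau>" .
      moreover have "Qhat k s \<bullet> d \<le> 0" using stepfacts inv unfolding d_def by blast
      moreover have "Qf P R \<gamma> (\<pi> k) s \<bullet> d = Qhat k s \<bullet> d + E \<bullet> d"
        unfolding E_def by (simp add: inner_diff_left)
      ultimately show "Qf P R \<gamma> (\<pi> k) s \<bullet> (\<pi> (Suc k) s - \<pi> k s) \<le> 2 * \<tau>"
        unfolding d_def by linarith
    qed
    have each: "Vf P R \<gamma> (\<pi> (Suc k)) s - Vf P R \<gamma> (\<pi> k) s \<le> 2 / (1 - \<gamma>) * \<tau>" for s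
      using improve[OF mdp pol pol c] by simp
    have "Vrho P R \<gamma> (\<pi> (Suc k)) \<rho> - Vrho P R \<gamma> (\<pi> k) \<rho>
        = (\<Sum>s\<in>UNIV. \<rho> s * (Vf P R \<gamma> (\<pi> (Suc k)) s - Vf P R \<gamma> (\<pi> k) s))"
      unfolding Vrho_def by (simp add: sum_subtractf right_diff_distrib)
    also have "\<dots> \<le> (\<Sum>s\<in>UNIV. \<rho> s * (2 / (1 - \<gamma>) * \<tau>))"
      using \<rho> each by (intro sum_mono mult_left_mono) (auto simp: prob_dist_def)
    also have "\<dots> = 2 / (1 - \<gamma>) * \<tau>" using \<rho> unfolding prob_dist_def by (subst sum_distrib_right[symmetric]) simp
    finally show "Vrho P R \<gamma> (\<pi> (Suc k)) \<rho> - Vrho P R \<gamma> (\<pi> k) \<rho> \<le> 2 / (1 - \<gamma>) * \<tau>" .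
  qed
qed

end
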